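(* Let $q$ be a prime power, $k\ge 2$, and let $D\subseteq\mathbb{F}_q^k\setminus\{0\}$ be a set with $aD=D$ for all $a\in\mathbb{F}_q^*$ and $\#D=n$. Let $\widetilde{[D,D]}=\{(\mathbf{x},1):\mathbf{x}\in D\}\cup\{(\mathbf{x},0):\mathbf{x}\in D\}\subseteq\mathbb{F}_q^{k+1}$. For a linear form $H=\alpha_1x_1+\cdots+\alpha_kx_k+\alpha_{k+1}x_{k+1}$ on $\mathbb{F}_q^{k+1}$, let $\widetilde H=\alpha_1x_1+\cdots+\alpha_kx_k$, let $c_{\widetilde H}=(\widetilde H(\mathbf{x}))_{\mathbf{x}\in D}\in\mathrm{C}_D$, and let $c_H=(c_{H,0},c_{H,1})\in\mathrm{C}_{\widetilde{[D,D]}}$ where $c_{H,0}=(H(\mathbf{x},0))_{\mathbf{x}\in D}$ and $c_{H,1}=(H(\mathbf{x},1))_{\mathbf{x}\in D}$. Then: (i) if $\alpha_{k+1}=0$, then $\mathrm{w}(c_{H,1})=\mathrm{w}(c_{H,0})$ and $\mathrm{w}(c_H)=2\,\mathrm{w}(c_{\widetilde H})$; (ii) if $\alpha_{k+1}\ne 0$, then $\mathrm{w}(c_H)=n+\frac{q-2}{q-1}\mathrm{w}(c_{\widetilde H})$.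
   Context: For a finite ordered set $D=\{P_1,\ldots,P_n\}\subseteq\mathbb{F}_q^k$, $\mathrm{C}_D=\{(f(P_1),\ldots,f(P_n)):f \text{ linear form on }\mathbb{F}_q^k\}$. $\mathrm{w}$ denotes Hamming weight. *)

theory Defs
  imports "HOL-Analysis.Analysis"
begin

definition lform :: "'a::comm_ring_1 ^ 'n \<Rightarrow> 'a ^ 'n \<Rightarrow> 'a" where
  "lform \<alpha> x = (\<Sum>i\<in>UNIV. \<alpha> $ i * x $ i)"

definition lform_ext :: "'a::comm_ring_1 ^ 'n \<Rightarrow> 'a \<Rightarrow> ('a ^ 'n) \<times> 'a \<Rightarrow> 'a" where
  "lform_ext \<alpha> \<beta> p = lform \<alpha> (fst p) + \<beta> * snd p"

definition hweight :: "'b set \<Rightarrow> ('b \<Rightarrow> 'a::zero) \<Rightarrow> nat" where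
  "hweight D c = card {p \<in> D. c p \<noteq> 0}"

definition tildeDD :: "('a::{zero,one} ^ 'n) set \<Rightarrow> (('a ^ 'n) \<times> 'a) set" where
  "tildeDD D = {(x, 1) | x. x \<in> D} \<union> {(x, 0) | x. x \<in> D}"

end

theory Submission
  imports Defs
begin

lemma lform_scale: "lform \<alpha> (c *s x) = c * lform \<alpha> x"
  unfolding lform_def by (simp add: sum_distrib_left algebra_simps)

lemma closed_mem:
  assumes cl: "\<forall>a::'a::field. a \<noteq> 0 \<longrightarrow> (\<lambda>x. a *s x) ` D = D" and a: "a \<noteq> 0" and x: "x \<in> D"
  shows "a *s x \<in> D"
proof -
  have "a *s x \<in> (\<lambda>x. a *s x) ` D" using x by blast
  then show ?thesis using cl a by simp
qed

lemma fiber_card: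
  fixes D :: "('a::{finite,field} ^ 'k) set"
  assumes cl: "\<forall>a::'a. a \<noteq> 0 \<longrightarrow> (\<lambda>x. a *s x) ` D = D" and c: "c \<noteq> 0"
  shows "card {x\<in>D. lform \<alpha> x = c} = card {x\<in>D. lform \<alpha> x = 1}"
proof -
  have "bij_betw (\<lambda>x. c *s x) {x\<in>D. lform \<alpha> x = 1} {x\<in>D. lform \<alpha> x = c}"
  proof (rule bij_betwI[where g="\<lambda>x. inverse c *s x"])
    show "(\<lambda>x. c *s x) \<in> {x \<in> D. lform \<alpha> x = 1} \<rightarrow> {x \<in> D. lform \<alpha> x = c}"
      using closed_mem[OF cl c] c by (auto simp: lform_scale)
    have "inverse c \<noteq> 0" using c by simp
    then show "(\<lambda>x. inverse c *s x) \<in> {x \<in> D. lform \<alpha> x = c} \<rightarrow> {x \<in> D. lform \<alpha> x = 1}"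
      using closed_mem[OF cl \<open>inverse c \<noteq> 0\<close>] c by (auto simp: lform_scale)
  qed (use c in \<open>auto simp: vector_smult_assoc\<close>)
  then show ?thesis by (simp add: bij_betw_same_card)
qed

theorem proposition5p1:
  fixes D :: "('a::{finite,field} ^ 'k) set"
    and \<alpha> :: "'a ^ 'k" and \<beta> :: 'a and n :: nat
  assumes "CARD('k) \<ge> 2"
    and "0 \<notin> D"
    and "\<forall>a::'a. a \<noteq> 0 \<longrightarrow> (\<lambda>x. a *s x) ` D = D"
    and "card D = n"
  shows "(\<beta> = 0 \<longrightarrow>
            hweight D (\<lambda>x. lform_ext \<alpha> \<beta> (x, 1)) = hweight D (\<lambda>x. lform_ext \<alpha> \<beta> (x, 0))
          \<and> hweight (tildeDD D) (lform_ext \<alpha> \<beta>) = 2 * hweight D (lform \<alpha>))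
       \<and> (\<beta> \<noteq> 0 \<longrightarrow>
            real (hweight (tildeDD D) (lform_ext \<alpha> \<beta>))
              = real n + (real CARD('a) - 2) / (real CARD('a) - 1) * real (hweight D (lform \<alpha>)))"
proof -
  let ?L = "lform \<alpha>"
  define S1 where "S1 = {x\<in>D. ?L x + \<beta> \<noteq> 0}"
  define S0 where "S0 = {x\<in>D. ?L x \<noteq> 0}"
  have fin: "finite D" by simp
  have eq: "{p \<in> tildeDD D. lform_ext \<alpha> \<beta> p \<noteq> 0} = (\<lambda>x. (x,1)) ` S1 \<union> (\<lambda>x. (x,0)) ` S0"
    unfolding tildeDD_def S1_def S0_def lform_ext_def by auto
  have tot: "hweight (tildeDD D) (lform_ext \<alpha> \<beta>) = card S1 + card S0"
    unfolding hweight_def eq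
    by (subst card_Un_disjoint) (auto simp: card_image inj_on_def)
  have w: "hweight D ?L = card S0" unfolding hweight_def S0_def ..
  have h1: "hweight D (\<lambda>x. lform_ext \<alpha> \<beta> (x, 1)) = card S1"
    unfolding hweight_def S1_def lform_ext_def by simp
  have h0: "hweight D (\<lambda>x. lform_ext \<alpha> \<beta> (x, 0)) = card S0"
    unfolding hweight_def S0_def lform_ext_def by simp
  define m where "m = card {x\<in>D. ?L x = 1}"
  have S0u: "S0 = (\<Union>c\<in>UNIV-{0}. {x\<in>D. ?L x = c})" unfolding S0_def by auto
  have "card S0 = (\<Sum>c\<in>UNIV-{0}. card {x\<in>D. ?L x = c})"
    unfolding S0u by (rule card_UN_disjoint) auto
  also have "\<dots> = (\<Sum>c\<in>UNIV-{0::'a}. m)"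
    
  proof (rule sum.cong)
    fix c :: 'a assume "c \<in> UNIV - {0}"
    then have "c \<noteq> 0" by simp
    from fiber_card[OF assms(3) this, of \<alpha>] show "card {x\<in>D. ?L x = c} = m" unfolding m_def .
  qed simp
  also have "\<dots> = (CARD('a) - 1) * m" by (simp add: card_Diff_subset)
  finally have S0c: "card S0 = (CARD('a) - 1) * m" .
  have q2: "CARD('a) \<ge> 2"
  proof -
    have "{0::'a, 1} \<subseteq> UNIV" by simp
    then have "card {0::'a,1} \<le> CARD('a)" by (rule card_mono[OF finite])
    then show ?thesis by simp
  qed
  show ?thesis
  proof (intro conjI impI)
    assume "\<beta> = 0"
    then have "S1 = S0" unfolding S1_def S0_def by simp
    then show "hweight D (\<lambda>x. lform_ext \<alpha> \<beta> (x, 1)) = hweight D (\<lambda>x. lform_ext \<alpha> \<beta> (x, 0))"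
      using h1 h0 by simp
    show "hweight (tildeDD D) (lform_ext \<alpha> \<beta>) = 2 * hweight D (lform \<alpha>)"
      using tot w \<open>S1 = S0\<close> by simp
  next
    assume b: "\<beta> \<noteq> 0"
    have "S1 = D - {x\<in>D. ?L x = -\<beta>}" unfolding S1_def by (auto simp: add_eq_0_iff)
    then have "card S1 = card D - card {x\<in>D. ?L x = -\<beta>}"
      by (simp add: card_Diff_subset)
    moreover have "card {x\<in>D. ?L x = -\<beta>} = m"
      unfolding m_def using fiber_card[OF assms(3), of "-\<beta>"] b by simp
    moreover have "m \<le> card D" unfolding m_def by (rule card_mono) auto
    ultimately have "real (card S1) = real n - real m" using assms(4) by simp
    moreover have "real (card S0) = (real CARD('a) - 1) * real m" using S0c q2 by (simp add: of_nat_diff)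
    moreover have "real CARD('a) - 1 \<noteq> 0" using q2 by simp
    ultimately have A: "real (card S1) = real n - real m" and B: "real (card S0) = (real CARD('a) - 1) * real m"
      and C: "real CARD('a) - 1 \<noteq> 0" by auto
    have E: "(real CARD('a) - 2) / (real CARD('a) - 1) * real (card S0) = (real CARD('a) - 2) * real m"
      unfolding B using C by (simp add: field_simps)
    show "real (hweight (tildeDD D) (lform_ext \<alpha> \<beta>))
              = real n + (real CARD('a) - 2) / (real CARD('a) - 1) * real (hweight D (lform \<alpha>))"
      unfolding tot w of_nat_add E unfolding A B by (simp add: algebra_simps)
  qed
qed

end
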